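(* Let $(G,G_1,G_2)$ be a quasi-double Lie group with structure maps $\alpha$ and $m$, and let $\sigma:G_2\times G_1\to G_2$ be defined by: for $a\in G_2$, $g\in G_1$, $\sigma(a,g)$ is the unique element of $G_2$ such that $ag=g'\,\sigma(a,g)$ in $G$ for some $g'\in G_1$. For $a\in G_2$ let $\lambda_a,\rho_a:G_2\to G_2$ be the left and right translations of the loop, $\lambda_a(c)=m(a,c)$, $\rho_a(c)=m(c,a)$. Then for all $a,b,c\in G_2$: \begin{enumerate} \item $\lambda_{m(a,b)}(c)=(\lambda_{\sigma(a,\alpha(b,c))}\circ\lambda_b)(c)$; \item $\rho_{m(a,b)}(c)=(\rho_b\circ\rho_a)(\sigma(c,\alpha(a,b)^{-1}))$; \item $(\rho_b\circ\lambda_a)(c)=(\lambda_{\sigma(a,\alpha(c,b))}\circ\rho_b)(c)$. \end{enumerate}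
   Context: A Lie loop is a real analytic manifold $B$ with an analytic binary operation $(a,b)\mapsto ab=m(a,b)$ having a two-sided neutral element $\varepsilon$, such that the equations $ab=c$ and $ba=c$ have unique solutions depending analytically on the data. It is right mono-alternative if $(ab^{k})b^{l}=ab^{k+l}$ for all integers $k,l$ and all $a,b$ (near $\varepsilon$). A quasi-double Lie group is a triple $(G,G_1,G_2)$ where (i) $G$ is a Lie group with identity $e$ and $G_1$ a closed Lie subgroup of $G$; (ii) $G_2$ is a closed submanifold of $G$ equipped with analytic maps $\alpha:G_2\times G_2\to G_1$ and $m:G_2\times G_2\to G_2$ with $(ab)_G=\alpha(a,b)\,m(a,b)$ for all $a,b\in G_2$ (product in $G$ on the left), such that $m$ makes $G_2$ a right mono-alternative Lie loop; (iii) the map $G_1\times G_2\to G$, $(g,a)\mapsto ga$, is a diffeomorphism. *)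

theory Defs
  imports "HOL-Algebra.Group"
begin

definition loop_inv :: "'a set \<Rightarrow> ('a \<Rightarrow> 'a \<Rightarrow> 'a) \<Rightarrow> 'a \<Rightarrow> 'a \<Rightarrow> 'a" where
  "loop_inv B m eps b = (THE x. x \<in> B \<and> m b x = eps)"

definition loop_pow :: "'a set \<Rightarrow> ('a \<Rightarrow> 'a \<Rightarrow> 'a) \<Rightarrow> 'a \<Rightarrow> 'a \<Rightarrow> int \<Rightarrow> 'a" where
  "loop_pow B m eps b k =
     (if 0 \<le> k then ((\<lambda>x. m x b) ^^ nat k) eps
      else ((\<lambda>x. m x (loop_inv B m eps b)) ^^ nat (- k)) eps)"

definition is_loop :: "'a set \<Rightarrow> ('a \<Rightarrow> 'a \<Rightarrow> 'a) \<Rightarrow> 'a \<Rightarrow> bool" where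
  "is_loop B m eps \<longleftrightarrow>
     eps \<in> B \<and> (\<forall>a\<in>B. \<forall>b\<in>B. m a b \<in> B) \<and>
     (\<forall>a\<in>B. m eps a = a \<and> m a eps = a) \<and>
     (\<forall>a\<in>B. \<forall>c\<in>B. (\<exists>!b. b \<in> B \<and> m a b = c) \<and> (\<exists>!b. b \<in> B \<and> m b a = c))"

definition right_mono_alternative :: "'a set \<Rightarrow> ('a \<Rightarrow> 'a \<Rightarrow> 'a) \<Rightarrow> 'a \<Rightarrow> bool" where
  "right_mono_alternative B m eps \<longleftrightarrow>
     (\<forall>a\<in>B. \<forall>b\<in>B. \<forall>k l :: int.
        m (m a (loop_pow B m eps b k)) (loop_pow B m eps b l) = m a (loop_pow B m eps b (k + l)))"

text \<open>Algebraic core of a quasi-double Lie group (G, G1, G2) with structure maps alpha, m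
  and loop neutral element eps.\<close>
definition quasi_double_group ::
  "('a, 'b) monoid_scheme \<Rightarrow> 'a set \<Rightarrow> 'a set \<Rightarrow> ('a \<Rightarrow> 'a \<Rightarrow> 'a) \<Rightarrow> ('a \<Rightarrow> 'a \<Rightarrow> 'a) \<Rightarrow> 'a \<Rightarrow> bool"
where
  "quasi_double_group G G1 G2 \<alpha> m eps \<longleftrightarrow>
     group G \<and> subgroup G1 G \<and> G2 \<subseteq> carrier G \<and>
     (\<forall>a\<in>G2. \<forall>b\<in>G2. \<alpha> a b \<in> G1 \<and> m a b \<in> G2 \<and> a \<otimes>\<^bsub>G\<^esub> b = \<alpha> a b \<otimes>\<^bsub>G\<^esub> m a b) \<and>
     is_loop G2 m eps \<and> right_mono_alternative G2 m eps \<and>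
     bij_betw (\<lambda>(g, a). g \<otimes>\<^bsub>G\<^esub> a) (G1 \<times> G2) (carrier G)"

definition qd_sigma :: "('a, 'b) monoid_scheme \<Rightarrow> 'a set \<Rightarrow> 'a set \<Rightarrow> 'a \<Rightarrow> 'a \<Rightarrow> 'a" where
  "qd_sigma G G1 G2 a g = (THE c. c \<in> G2 \<and> (\<exists>g'\<in>G1. a \<otimes>\<^bsub>G\<^esub> g = g' \<otimes>\<^bsub>G\<^esub> c))"

end

theory Submission
  imports Defs
begin

lemma qd_uniq:
  assumes qd: "quasi_double_group G G1 G2 \<alpha> m eps"
    and "g1 \<in> G1" "g2 \<in> G1" "x \<in> G2" "y \<in> G2"
    and "g1 \<otimes>\<^bsub>G\<^esub> x = g2 \<otimes>\<^bsub>G\<^esub> y"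
  shows "x = y"
proof -
  have "inj_on (\<lambda>(g, a). g \<otimes>\<^bsub>G\<^esub> a) (G1 \<times> G2)"
    using qd unfolding quasi_double_group_def bij_betw_def by blast
  moreover have "(\<lambda>(g, a). g \<otimes>\<^bsub>G\<^esub> a) (g1, x) = (\<lambda>(g, a). g \<otimes>\<^bsub>G\<^esub> a) (g2, y)"
    using assms by simp
  moreover have "(g1, x) \<in> G1 \<times> G2" "(g2, y) \<in> G1 \<times> G2" using assms by auto
  ultimately have "(g1, x) = (g2, y)"
    by (rule inj_onD)
  then show ?thesis by simp
qed

lemma qd_sigma_prop:
  assumes qd: "quasi_double_group G G1 G2 \<alpha> m eps"
    and a: "a \<in> G2" and g: "g \<in> G1"
  shows "qd_sigma G G1 G2 a g \<in> G2 \<and> (\<exists>g'\<in>G1. a \<otimes>\<^bsub>G\<^esub> g = g' \<otimes>\<^bsub>G\<^esub> qd_sigma G G1 G2 a g)"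
proof -
  have grp: "group G" and sub: "subgroup G1 G" and G2c: "G2 \<subseteq> carrier G"
    and bij: "bij_betw (\<lambda>(g, a). g \<otimes>\<^bsub>G\<^esub> a) (G1 \<times> G2) (carrier G)"
    using qd unfolding quasi_double_group_def by auto
  have "a \<otimes>\<^bsub>G\<^esub> g \<in> carrier G"
    using a g G2c sub grp by (meson group.is_monoid monoid.m_closed subgroup.mem_carrier subsetD)
  then obtain p where "p \<in> G1 \<times> G2" "(\<lambda>(g, a). g \<otimes>\<^bsub>G\<^esub> a) p = a \<otimes>\<^bsub>G\<^esub> g"
    using bij unfolding bij_betw_def by (metis imageE)
  then obtain g' c where gc: "g' \<in> G1" "c \<in> G2" "a \<otimes>\<^bsub>G\<^esub> g = g' \<otimes>\<^bsub>G\<^esub> c"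
    by auto
  have ex: "\<exists>!c. c \<in> G2 \<and> (\<exists>g'\<in>G1. a \<otimes>\<^bsub>G\<^esub> g = g' \<otimes>\<^bsub>G\<^esub> c)"
  proof
    show "c \<in> G2 \<and> (\<exists>g'\<in>G1. a \<otimes>\<^bsub>G\<^esub> g = g' \<otimes>\<^bsub>G\<^esub> c)" using gc by blast
  next
    fix d assume "d \<in> G2 \<and> (\<exists>g'\<in>G1. a \<otimes>\<^bsub>G\<^esub> g = g' \<otimes>\<^bsub>G\<^esub> d)"
    then obtain h where "d \<in> G2" "h \<in> G1" "a \<otimes>\<^bsub>G\<^esub> g = h \<otimes>\<^bsub>G\<^esub> d" by blast
    then show "d = c" using qd_uniq[OF qd, of h g' d c] gc by simp
  qed
  show ?thesis unfolding qd_sigma_def using theI'[OF ex] by blast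
qed

lemma part1:
  fixes G :: "('a, 'b) monoid_scheme" (structure)
  assumes qd: "quasi_double_group G G1 G2 \<alpha> m eps"
    and a: "a \<in> G2" and b: "b \<in> G2" and c: "c \<in> G2"
  shows "m (m a b) c = m (qd_sigma G G1 G2 a (\<alpha> b c)) (m b c)"
proof -
  have grp: "group G" and sub: "subgroup G1 G" and G2c: "G2 \<subseteq> carrier G"
    and st: "\<forall>a\<in>G2. \<forall>b\<in>G2. \<alpha> a b \<in> G1 \<and> m a b \<in> G2 \<and> a \<otimes>\<^bsub>G\<^esub> b = \<alpha> a b \<otimes>\<^bsub>G\<^esub> m a b"
    using qd unfolding quasi_double_group_def by auto
  interpret group G by fact
  have G1c: "G1 \<subseteq> carrier G" using sub by (simp add: subgroup.subset)
  define s where "s = qd_sigma G G1 G2 a (\<alpha> b c)"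
  have abc: "\<alpha> b c \<in> G1" "m b c \<in> G2" "b \<otimes> c = \<alpha> b c \<otimes> m b c" using st b c by auto
  obtain g' where s: "s \<in> G2" "g' \<in> G1" "a \<otimes> \<alpha> b c = g' \<otimes> s"
    using qd_sigma_prop[OF qd a abc(1)] s_def by blast
  have ab: "\<alpha> a b \<in> G1" "m a b \<in> G2" "a \<otimes> b = \<alpha> a b \<otimes> m a b" using st a b by auto
  have abc2: "\<alpha> (m a b) c \<in> G1" "m (m a b) c \<in> G2" "m a b \<otimes> c = \<alpha> (m a b) c \<otimes> m (m a b) c"
    using st ab(2) c by auto
  have sbc: "\<alpha> s (m b c) \<in> G1" "m s (m b c) \<in> G2" "s \<otimes> m b c = \<alpha> s (m b c) \<otimes> m s (m b c)"
    using st s(1) abc(2) by auto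
  have cG: "a \<in> carrier G" "b \<in> carrier G" "c \<in> carrier G" "s \<in> carrier G" "m b c \<in> carrier G"
    "m a b \<in> carrier G" "m (m a b) c \<in> carrier G" "m s (m b c) \<in> carrier G"
    using G2c a b c s abc ab abc2 sbc by auto
  have cG1: "\<alpha> a b \<in> carrier G" "\<alpha> (m a b) c \<in> carrier G" "\<alpha> b c \<in> carrier G" "g' \<in> carrier G"
    "\<alpha> s (m b c) \<in> carrier G"
    using G1c ab abc2 abc s sbc by auto
  have "(\<alpha> a b \<otimes> \<alpha> (m a b) c) \<otimes> m (m a b) c = \<alpha> a b \<otimes> (\<alpha> (m a b) c \<otimes> m (m a b) c)"
    using cG cG1 by (simp only: m_assoc)
  also have "\<dots> = \<alpha> a b \<otimes> (m a b \<otimes> c)" by (simp only: abc2(3))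
  also have "\<dots> = (\<alpha> a b \<otimes> m a b) \<otimes> c" using cG cG1 by (simp only: m_assoc)
  also have "\<dots> = (a \<otimes> b) \<otimes> c" by (simp only: ab(3))
  also have "\<dots> = a \<otimes> (b \<otimes> c)" using cG by (simp only: m_assoc)
  also have "\<dots> = a \<otimes> (\<alpha> b c \<otimes> m b c)" by (simp only: abc(3))
  also have "\<dots> = (a \<otimes> \<alpha> b c) \<otimes> m b c" using cG cG1 by (simp only: m_assoc)
  also have "\<dots> = (g' \<otimes> s) \<otimes> m b c" by (simp only: s(3))
  also have "\<dots> = g' \<otimes> (s \<otimes> m b c)" using cG cG1 by (simp only: m_assoc)
  also have "\<dots> = g' \<otimes> (\<alpha> s (m b c) \<otimes> m s (m b c))" by (simp only: sbc(3))
  also have "\<dots> = (g' \<otimes> \<alpha> s (m b c)) \<otimes> m s (m b c)" using cG cG1 by (simp only: m_assoc)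
  finally have eq: "(\<alpha> a b \<otimes> \<alpha> (m a b) c) \<otimes> m (m a b) c = (g' \<otimes> \<alpha> s (m b c)) \<otimes> m s (m b c)" .
  have "\<alpha> a b \<otimes> \<alpha> (m a b) c \<in> G1" "g' \<otimes> \<alpha> s (m b c) \<in> G1"
    using sub ab abc2 s sbc by (auto intro: subgroup.m_closed)
  from qd_uniq[OF qd this abc2(2) sbc(2) eq] show ?thesis unfolding s_def .
qed

lemma part2:
  fixes G :: "('a, 'b) monoid_scheme" (structure)
  assumes qd: "quasi_double_group G G1 G2 \<alpha> m eps"
    and a: "a \<in> G2" and b: "b \<in> G2" and c: "c \<in> G2"
  shows "m c (m a b) = m (m (qd_sigma G G1 G2 c (inv\<^bsub>G\<^esub> (\<alpha> a b))) a) b"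
proof -
  have grp: "group G" and sub: "subgroup G1 G" and G2c: "G2 \<subseteq> carrier G"
    and st: "\<forall>a\<in>G2. \<forall>b\<in>G2. \<alpha> a b \<in> G1 \<and> m a b \<in> G2 \<and> a \<otimes>\<^bsub>G\<^esub> b = \<alpha> a b \<otimes>\<^bsub>G\<^esub> m a b"
    using qd unfolding quasi_double_group_def by auto
  interpret group G by fact
  have G1c: "G1 \<subseteq> carrier G" using sub by (simp add: subgroup.subset)
  have ab: "\<alpha> a b \<in> G1" "m a b \<in> G2" "a \<otimes> b = \<alpha> a b \<otimes> m a b" using st a b by auto
  have hi: "inv (\<alpha> a b) \<in> G1" using sub ab(1) by (simp add: subgroup.m_inv_closed)
  define s where "s = qd_sigma G G1 G2 c (inv (\<alpha> a b))"
  obtain g' where s: "s \<in> G2" "g' \<in> G1" "c \<otimes> inv (\<alpha> a b) = g' \<otimes> s"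
    using qd_sigma_prop[OF qd c hi] s_def by blast
  have sa: "\<alpha> s a \<in> G1" "m s a \<in> G2" "s \<otimes> a = \<alpha> s a \<otimes> m s a" using st s(1) a by auto
  have sab: "\<alpha> (m s a) b \<in> G1" "m (m s a) b \<in> G2" "m s a \<otimes> b = \<alpha> (m s a) b \<otimes> m (m s a) b"
    using st sa(2) b by auto
  have cd: "\<alpha> c (m a b) \<in> G1" "m c (m a b) \<in> G2" "c \<otimes> m a b = \<alpha> c (m a b) \<otimes> m c (m a b)"
    using st c ab(2) by auto
  have cG: "a \<in> carrier G" "b \<in> carrier G" "c \<in> carrier G" "s \<in> carrier G" "m a b \<in> carrier G"
    "m s a \<in> carrier G" "m (m s a) b \<in> carrier G" "m c (m a b) \<in> carrier G"
    using G2c a b c s ab sa sab cd by auto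
  have cG1: "\<alpha> a b \<in> carrier G" "g' \<in> carrier G" "\<alpha> s a \<in> carrier G" "\<alpha> (m s a) b \<in> carrier G"
    "\<alpha> c (m a b) \<in> carrier G"
    using G1c ab s sa sab cd by auto
  have d: "m a b = inv (\<alpha> a b) \<otimes> (a \<otimes> b)"
    using ab(3) cG cG1 by (simp add: m_assoc[symmetric])
  have "\<alpha> c (m a b) \<otimes> m c (m a b) = c \<otimes> m a b" using cd by simp
  also have "\<dots> = c \<otimes> (inv (\<alpha> a b) \<otimes> (a \<otimes> b))" by (simp only: d[symmetric])
  also have "\<dots> = (c \<otimes> inv (\<alpha> a b)) \<otimes> (a \<otimes> b)" using cG cG1 by (simp only: m_assoc inv_closed m_closed)
  also have "\<dots> = (g' \<otimes> s) \<otimes> (a \<otimes> b)" by (simp only: s(3))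
  also have "\<dots> = g' \<otimes> ((s \<otimes> a) \<otimes> b)" using cG cG1 by (simp only: m_assoc m_closed)
  also have "\<dots> = g' \<otimes> ((\<alpha> s a \<otimes> m s a) \<otimes> b)" by (simp only: sa(3))
  also have "\<dots> = (g' \<otimes> \<alpha> s a) \<otimes> (m s a \<otimes> b)" using cG cG1 by (simp only: m_assoc m_closed)
  also have "\<dots> = (g' \<otimes> \<alpha> s a) \<otimes> (\<alpha> (m s a) b \<otimes> m (m s a) b)" by (simp only: sab(3))
  also have "\<dots> = (g' \<otimes> \<alpha> s a \<otimes> \<alpha> (m s a) b) \<otimes> m (m s a) b"
    using cG cG1 by (simp only: m_assoc m_closed)
  finally have eq: "\<alpha> c (m a b) \<otimes> m c (m a b) = (g' \<otimes> \<alpha> s a \<otimes> \<alpha> (m s a) b) \<otimes> m (m s a) b" .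
  have "g' \<otimes> \<alpha> s a \<otimes> \<alpha> (m s a) b \<in> G1"
    using sub s sa sab by (auto intro: subgroup.m_closed)
  from qd_uniq[OF qd cd(1) this cd(2) sab(2) eq] show ?thesis unfolding s_def .
qed

theorem mainTheorem2:
  fixes G :: "('a, 'b) monoid_scheme"
    and G1 G2 :: "'a set"
    and \<alpha> m :: "'a \<Rightarrow> 'a \<Rightarrow> 'a"
    and eps :: 'a
  assumes qd: "quasi_double_group G G1 G2 \<alpha> m eps"
    and a: "a \<in> G2" and b: "b \<in> G2" and c: "c \<in> G2"
  defines "\<sigma> \<equiv> qd_sigma G G1 G2"
  shows "m (m a b) c = m (\<sigma> a (\<alpha> b c)) (m b c) \<and>
         m c (m a b) = m (m (\<sigma> c (inv\<^bsub>G\<^esub> (\<alpha> a b))) a) b \<and>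
         m (m a c) b = m (\<sigma> a (\<alpha> c b)) (m c b)"
  unfolding \<sigma>_def using part1[OF qd a b c] part2[OF qd a b c] part1[OF qd a c b] by simp

end
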